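(* Let $H$ be a real Hilbert space, $T\subset H\times H$ a closed convex cone, $T(h):=\{z\in H:(h,z)\in T\}$ and $N:=T^\circ$. Consider: (i) there exists $\beta>0$ such that $\langle h,z\rangle\le-\beta$ for all $(h,z)\in N$ with $\|z\|=1$; (ii) there exists $\beta_1>0$ such that for each $h\in S_H\cap\operatorname{sqri}(\operatorname{Proj}_hT)$ there exists $z$ with $(h,z)\in T$ and $\langle h,z\rangle\ge\beta_1$. Then (i) implies (ii). If moreover $\operatorname{qri}N\neq\emptyset$ and $\operatorname{qri}(\operatorname{Proj}_zN)\subset\operatorname{sqri}(\operatorname{Proj}_hT)$, then (ii) implies (i).
   Context: $S_H$ is the unit sphere of $H$. $T^\circ:=\{(a,b)\in H\times H:\langle a,h\rangle+\langle b,z\rangle\le0\ \forall(h,z)\in T\}$. For $S\subset H\times H$: $\operatorname{Proj}_hS:=\{h:\exists z,\ (h,z)\in S\}$, $\operatorname{Proj}_zS:=\{z:\exists h,\ (h,z)\in S\}$. For a set $A$ in a Hilbert space: $\operatorname{qri}A:=\{x\in A:\overline{\operatorname{cone}}(A-x)\text{ is a linear subspace}\}$ and $\operatorname{sqri}A:=\{x\in A:\operatorname{cone}(A-x)\text{ is a closed linear subspace}\}$, where $\operatorname{cone}(A-x)$ is the cone generated by $A-x$ and $\overline{\operatorname{cone}}$ its norm closure. *)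

theory Defs
  imports "HOL-Analysis.Analysis"
begin

definition polar :: "('a::real_inner \<times> 'a) set \<Rightarrow> ('a \<times> 'a) set" where
  "polar T = {(a, b). \<forall>(h, z)\<in>T. inner a h + inner b z \<le> 0}"

definition proj_h :: "('a \<times> 'a) set \<Rightarrow> 'a set" where
  "proj_h S = {h. \<exists>z. (h, z) \<in> S}"

definition proj_z :: "('a \<times> 'a) set \<Rightarrow> 'a set" where
  "proj_z S = {z. \<exists>h. (h, z) \<in> S}"

definition qri :: "'a::real_normed_vector set \<Rightarrow> 'a set" where
  "qri A = {x \<in> A. subspace (closure (cone hull ((\<lambda>a. a - x) ` A)))}"

definition sqri :: "'a::real_normed_vector set \<Rightarrow> 'a set" where
  "sqri A = {x \<in> A. closed (cone hull ((\<lambda>a. a - x) ` A)) \<and> subspace (cone hull ((\<lambda>a. a - x) ` A))}"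

end

theory Submission
  imports Defs
begin


lemma parallelogram_ineq:
  fixes a b :: "'a::real_inner"
  shows "norm (a - b)^2 = 2 * norm a ^2 + 2 * norm b ^2 - norm (a + b)^2"
  by (simp add: power2_norm_eq_inner inner_diff inner_add inner_commute algebra_simps)

lemma proj_exists:
  fixes S :: "'a::{real_inner,complete_space} set"
  assumes "closed S" "convex S" "S \<noteq> {}"
  shows "\<exists>q\<in>S. \<forall>y\<in>S. norm (p - q) \<le> norm (p - y)"
proof -
  define D where "D = (\<lambda>y. norm (p - y)^2) ` S"
  define d where "d = Inf D"
  have Dne: "D \<noteq> {}" using assms(3) by (simp add: D_def)
  have bdd: "bdd_below D" unfolding D_def by (rule bdd_belowI[of _ 0]) auto
  have dle: "d \<le> norm (p - y)^2" if "y \<in> S" for y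
    unfolding d_def by (rule cInf_lower) (use that bdd D_def in auto)
  have "\<exists>x\<in>S. norm (p - x)^2 < d + 1/(real n + 1)" for n
  proof -
    have "Inf D < d + 1/(real n + 1)" unfolding d_def by simp
    then obtain t where "t \<in> D" "t < d + 1/(real n + 1)"
      using cInf_less_iff[OF Dne bdd] by blast
    then show ?thesis unfolding D_def by auto
  qed
  then obtain x where xS: "\<And>n. x n \<in> S" and xd: "\<And>n. norm (p - x n)^2 < d + 1/(real n + 1)"
    by metis
  have key: "norm (x m - x n)^2 \<le> 2/(real m + 1) + 2/(real n + 1)" for m n
  proof -
    have mid: "(1/2) *\<^sub>R x m + (1/2) *\<^sub>R x n \<in> S"
      using assms(2) xS by (intro convexD) auto
    have "(p - x m) + (p - x n) = 2 *\<^sub>R (p - ((1/2) *\<^sub>R x m + (1/2) *\<^sub>R x n))"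
      by (simp add: algebra_simps scaleR_2)
    hence "norm ((p - x m) + (p - x n)) = 2 * norm (p - ((1/2) *\<^sub>R x m + (1/2) *\<^sub>R x n))"
      by simp
    hence e: "norm ((p - x m) + (p - x n))^2 = 4 * norm (p - ((1/2) *\<^sub>R x m + (1/2) *\<^sub>R x n))^2"
      by (simp add: power2_eq_square)
    have "d \<le> norm (p - ((1/2) *\<^sub>R x m + (1/2) *\<^sub>R x n))^2" using dle[OF mid] .
    moreover have "x m - x n = (p - x n) - (p - x m)" by simp
    hence "norm (x m - x n)^2 = 2 * norm (p - x n)^2 + 2 * norm (p - x m)^2 - norm ((p - x m) + (p - x n))^2"
      using parallelogram_ineq[of "p - x n" "p - x m"] by (simp add: add.commute)
    ultimately show ?thesis using e xd[of m] xd[of n] by linarith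
  qed
  have "Cauchy x"
  proof (rule metric_CauchyI)
    fix e :: real assume "e > 0"
    obtain N :: nat where N: "4 / e^2 < real N" using reals_Archimedean2 by blast
    show "\<exists>M. \<forall>m\<ge>M. \<forall>n\<ge>M. dist (x m) (x n) < e"
    proof (intro exI allI impI)
      fix m n assume "N \<le> m" "N \<le> n"
      have "2/(real m + 1) \<le> 2/(real N + 1)" "2/(real n + 1) \<le> 2/(real N + 1)"
        using \<open>N \<le> m\<close> \<open>N \<le> n\<close> by (auto intro!: divide_left_mono)
      moreover have "4/(real N + 1) < e^2"
        using N \<open>e>0\<close> by (simp add: field_simps) (smt (verit) zero_less_power)
      ultimately have "norm (x m - x n)^2 < e^2" using key[of m n] by linarith
      thus "dist (x m) (x n) < e" using \<open>e>0\<close>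
        by (simp add: dist_norm power_less_imp_less_base)
    qed
  qed
  then obtain q where xq: "x \<longlonglongrightarrow> q" using Cauchy_convergent_iff convergent_def by blast
  have qS: "q \<in> S" using closed_sequentially[OF assms(1)] xS xq by blast
  have l1: "(\<lambda>n. norm (p - x n)^2) \<longlonglongrightarrow> norm (p - q)^2"
    by (intro tendsto_intros xq)
  have l2: "(\<lambda>n. d + 1/(real n + 1)) \<longlonglongrightarrow> d"
    using LIMSEQ_inverse_real_of_nat_add[of d] by (simp add: inverse_eq_divide add.commute)
  have "norm (p - q)^2 \<le> d"
    using LIMSEQ_le[OF l1 l2] xd less_imp_le by (simp add: order_less_imp_le)
  hence "norm (p - q)^2 \<le> norm (p - y)^2" if "y \<in> S" for y using dle[OF that] by linarith
  hence "norm (p - q) \<le> norm (p - y)" if "y \<in> S" for y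
    using that by (meson norm_ge_zero power2_le_imp_le)
  thus ?thesis using qS by blast
qed

lemma proj_variational:
  fixes S :: "'a::real_inner set"
  assumes "convex S" "q \<in> S" "\<forall>y\<in>S. norm (p - q) \<le> norm (p - y)" "y \<in> S"
  shows "inner (p - q) (y - q) \<le> 0"
proof (rule ccontr)
  assume "\<not> ?thesis"
  hence pos: "inner (p - q) (y - q) > 0" by simp
  define c where "c = inner (p - q) (y - q)"
  define n where "n = norm (y - q)^2"
  have "n > 0"
  proof -
    have "y \<noteq> q" using pos by auto
    thus ?thesis unfolding n_def by simp
  qed
  define t where "t = min 1 (c / n)"
  have t0: "t > 0" using pos \<open>n>0\<close> unfolding t_def c_def by auto
  have t1: "t \<le> 1" unfolding t_def by simp
  have "q + t *\<^sub>R (y - q) \<in> S"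
  proof -
    have "(1 - t) *\<^sub>R q + t *\<^sub>R y \<in> S" using convexD[OF assms(1) assms(2) assms(4)] t0 t1 by auto
    moreover have "(1 - t) *\<^sub>R q + t *\<^sub>R y = q + t *\<^sub>R (y - q)" by (simp add: algebra_simps)
    ultimately show ?thesis by simp
  qed
  hence "norm (p - q) \<le> norm (p - (q + t *\<^sub>R (y - q)))" using assms(3) by blast
  hence "norm (p - q)^2 \<le> norm ((p - q) - t *\<^sub>R (y - q))^2"
    by (simp add: algebra_simps power_mono)
  also have "\<dots> = norm (p - q)^2 - 2 * t * c + t^2 * n"
    unfolding c_def n_def power2_norm_eq_inner
    by (simp add:  inner_diff inner_commute algebra_simps power2_eq_square)
  finally have "2 * t * c \<le> t^2 * n" by simp
  hence "2 * c \<le> t * n" using t0 by (simp add: power2_eq_square)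
  moreover have "t * n \<le> c" unfolding t_def using \<open>n>0\<close>
    by (metis min.cobounded2 mult_right_mono nonzero_eq_divide_eq order_less_imp_le less_irrefl)
  ultimately show False using pos c_def by linarith
qed

lemma cone_separation:
  fixes K :: "'a::{real_inner,complete_space} set"
  assumes "closed K" "convex K" "cone K" "K \<noteq> {}" "p \<notin> K"
  shows "\<exists>a. (\<forall>k\<in>K. inner a k \<le> 0) \<and> inner a p > 0"
proof -
  obtain q where qK: "q \<in> K" and qm: "\<forall>y\<in>K. norm (p - q) \<le> norm (p - y)"
    using proj_exists[OF assms(1,2,4)] by blast
  have vi: "inner (p - q) (y - q) \<le> 0" if "y \<in> K" for y
    using proj_variational[OF assms(2) qK qm that] .
  have "0 \<in> K" using assms(3,4) cone_contains_0 by blast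
  have "2 *\<^sub>R q \<in> K" using assms(3) qK by (simp add: mem_cone)
  have a: "inner (p - q) q = 0"
    using vi[OF \<open>0 \<in> K\<close>] vi[OF \<open>2 *\<^sub>R q \<in> K\<close>] by (simp add: algebra_simps inner_diff_right)
  show ?thesis
  proof (intro exI conjI ballI)
    fix k assume "k \<in> K" thus "inner (p - q) k \<le> 0" using vi[of k] a by (simp add: inner_diff_right)
  next
    have "p \<noteq> q" using qK assms(5) by auto
    hence "inner (p - q) (p - q) > 0" by simp
    thus "inner (p - q) p > 0" using a by (simp add: inner_diff_right)
  qed
qed



lemma convex_cone_add:
  assumes "convex T" "cone T" "x \<in> T" "y \<in> T" shows "x + y \<in> T"
  using assms convex_cone by blast

lemma geom_sum_half: "(\<Sum>i<n. (1/2::real)^(Suc i)) = 1 - (1/2)^n"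
  by (induction n) (auto simp: field_simps)

lemma removal:
  fixes T :: "('a::{real_inner,complete_space} \<times> 'a) set"
  assumes clT: "closed T" and cvT: "convex T" and coT: "cone T" and sL: "subspace L"
    and AL: "A \<subseteq> L" and Aw: "\<forall>a\<in>A. \<exists>w. (h + a, w) \<in> T \<and> norm w \<le> C"
    and approx: "\<forall>y\<in>L. norm y < r \<longrightarrow> (\<forall>\<delta>>0. \<exists>a\<in>A. norm (y - a) < \<delta>)"
    and r0: "r > 0"
    and yL: "y \<in> L" and yr: "norm y < r/2"
  shows "\<exists>w. (h + y, w) \<in> T \<and> norm w \<le> C"
proof -
  define t :: "nat \<Rightarrow> real" where "t n = (1/2)^(Suc n)" for n
  have t0: "t n > 0" for n by (simp add: t_def)
  have scaled: "\<exists>a\<in>A. norm (e - t n *\<^sub>R a) < t (Suc n) * r" if "e \<in> L" "norm e < t n * r" for e n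
  proof -
    have "(1 / t n) *\<^sub>R e \<in> L" using sL that(1) by (simp add: subspace_scale)
    moreover have "norm ((1 / t n) *\<^sub>R e) < r" using that(2) t0[of n] by (simp add: field_simps)
    ultimately obtain a where a: "a \<in> A" "norm ((1 / t n) *\<^sub>R e - a) < r/2"
      using approx r0 by (meson half_gt_zero)
    have "e - t n *\<^sub>R a = t n *\<^sub>R ((1 / t n) *\<^sub>R e - a)" using t0[of n]
      by (simp add: algebra_simps)
    hence "norm (e - t n *\<^sub>R a) = t n * norm ((1 / t n) *\<^sub>R e - a)" using t0[of n] by simp
    also have "\<dots> < t n * (r/2)" using a(2) t0[of n] by simp
    also have "\<dots> = t (Suc n) * r" by (simp add: t_def)
    finally show ?thesis using a(1) by blast
  qed
  define pick where "pick n e = (SOME a. a \<in> A \<and> norm (e - t n *\<^sub>R a) < t (Suc n) * r)" for n e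
  have pick: "pick n e \<in> A \<and> norm (e - t n *\<^sub>R pick n e) < t (Suc n) * r"
    if "e \<in> L" "norm e < t n * r" for e n
  proof -
    have "\<exists>a. a \<in> A \<and> norm (e - t n *\<^sub>R a) < t (Suc n) * r" using scaled[OF that] by blast
    from someI_ex[OF this] show ?thesis unfolding pick_def .
  qed
  define E where "E = rec_nat y (\<lambda>n e. e - t n *\<^sub>R pick n e)"
  have E0: "E 0 = y" and ES: "E (Suc n) = E n - t n *\<^sub>R pick n (E n)" for n
    by (simp_all add: E_def)
  have inv: "E n \<in> L \<and> norm (E n) < t n * r" for n
  proof (induction n)
    case 0 show ?case using yL yr by (simp add: E0 t_def)
  next
    case (Suc n)
    have p: "pick n (E n) \<in> A" "norm (E n - t n *\<^sub>R pick n (E n)) < t (Suc n) * r"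
      using pick Suc by blast+
    hence "E (Suc n) \<in> L" using Suc AL sL ES
      by (metis subset_iff subspace_diff subspace_scale)
    thus ?case using p(2) ES by simp
  qed
  define a where "a n = pick n (E n)" for n
  have aA: "a n \<in> A" for n unfolding a_def using pick[OF inv[THEN conjunct1] inv[THEN conjunct2]] by simp
  define w where "w n = (SOME w. (h + a n, w) \<in> T \<and> norm w \<le> C)" for n
  have w: "(h + a n, w n) \<in> T \<and> norm (w n) \<le> C" for n
    unfolding w_def using someI_ex Aw aA by (metis (no_types, lifting))
  have C0: "C \<ge> 0" using w[of 0] by (meson norm_ge_zero order_trans)
  define P where "P n = (\<Sum>i<n. t i *\<^sub>R (h + a i, w i))" for n
  have Tne: "T \<noteq> {}" using w by blast
  have PT: "P n \<in> T" for n
  proof (induction n)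
    case 0
    have "0 \<in> T" using cone_contains_0[OF coT] Tne by blast
    thus ?case by (simp add: P_def zero_prod_def)
  next
    case (Suc n)
    have "t n *\<^sub>R (h + a n, w n) \<in> T" using mem_cone[OF coT w[THEN conjunct1] less_imp_le[OF t0]] .
    thus ?case using Suc convex_cone_add[OF cvT coT] by (simp add: P_def)
  qed
  have fstP: "fst (P n) = (1 - (1/2)^n) *\<^sub>R h + (y - E n)" for n
  proof (induction n)
    case 0 show ?case by (simp add: P_def E0)
  next
    case (Suc n)
    have "fst (P (Suc n)) = fst (P n) + t n *\<^sub>R (h + a n)" by (simp add: P_def)
    also have "\<dots> = (1 - (1/2)^n) *\<^sub>R h + (y - E n) + t n *\<^sub>R (h + a n)" using Suc by simp
    also have "\<dots> = (1 - (1/2)^Suc n) *\<^sub>R h + (y - E (Suc n))"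
      by (simp add: ES a_def t_def algebra_simps) (simp flip: scaleR_add_left)
    finally show ?case .
  qed
  define S where "S n = snd (P n)" for n
  have SS: "S (Suc n) = S n + t n *\<^sub>R w n" for n by (simp add: S_def P_def)
  have Sbd: "norm (S (m + k) - S m) \<le> C * ((1/2)^m - (1/2)^(m+k))" for m k
  proof (induction k)
    case 0 show ?case by simp
  next
    case (Suc k)
    define q where "q = (1/2::real)^(m+k)"
    have tq: "t (m+k) = q/2" unfolding t_def q_def by simp
    have q2: "(1/2::real)^(m + Suc k) = q/2" unfolding q_def by simp
    have eq: "S (m + Suc k) - S m = (S (m + k) - S m) + t (m+k) *\<^sub>R w (m+k)"
      by (simp add: SS)
    have "norm (S (m + Suc k) - S m) \<le> norm (S (m + k) - S m) + norm (t (m+k) *\<^sub>R w (m+k))"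
      unfolding eq by (rule norm_triangle_ineq)
    also have "norm (t (m+k) *\<^sub>R w (m+k)) = t (m+k) * norm (w (m+k))"
      using t0[of "m+k"] by simp
    also have "t (m+k) * norm (w (m+k)) \<le> t (m+k) * C"
      using w[of "m+k"] t0[of "m+k"] by (intro mult_left_mono) simp_all
    finally have "norm (S (m + Suc k) - S m) \<le> C * ((1/2)^m - q) + q/2 * C"
      using Suc unfolding tq q_def by linarith
    also have "\<dots> = C * ((1/2)^m - (1/2)^(m + Suc k))" unfolding q2 by (simp add: algebra_simps)
    finally show ?case .
  qed
  have Sbd2: "norm (S n - S m) \<le> C * (1/2)^m" if "m \<le> n" for m n
  proof -
    define k where "k = n - m"
    have k: "n = m + k" using that unfolding k_def by simp
    have "C * ((1/2)^m - (1/2)^(m+k)) \<le> C * (1/2::real)^m"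
      using C0 by (intro mult_left_mono) simp_all
    thus ?thesis using Sbd[of m k] unfolding k by linarith
  qed
  have "Cauchy S"
  proof (rule metric_CauchyI)
    fix e :: real assume "e > 0"
    obtain N where N: "(1/2::real)^N < e / (C + 1)"
    proof -
      have "e/(C+1) > 0" using \<open>e>0\<close> C0 by simp
      from real_arch_pow_inv[OF this, of "1/2"] show ?thesis using that by force
    qed
    have CN: "C * (1/2::real)^N < e"
    proof -
      have "C * (1/2::real)^N \<le> (C+1) * (1/2)^N" by simp
      also have "\<dots> < (C+1) * (e/(C+1))" using N C0 by (intro mult_strict_left_mono) simp_all
      also have "\<dots> = e" using C0 by simp
      finally show ?thesis .
    qed
    show "\<exists>M. \<forall>m\<ge>M. \<forall>n\<ge>M. dist (S m) (S n) < e"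
    proof (intro exI allI impI)
      fix m n assume mn: "N \<le> m" "N \<le> n"
      have mono: "C * (1/2::real)^k \<le> C * (1/2)^N" if "N \<le> k" for k
        using that C0 by (intro mult_left_mono power_decreasing) simp_all
      show "dist (S m) (S n) < e"
      proof (cases "m \<le> n")
        case True
        hence "dist (S m) (S n) \<le> C * (1/2)^m" using Sbd2[OF True] by (simp add: dist_norm norm_minus_commute)
        thus ?thesis using mono[OF mn(1)] CN by linarith
      next
        case False
        hence "dist (S m) (S n) \<le> C * (1/2)^n" using Sbd2[of n m] by (simp add: dist_norm)
        thus ?thesis using mono[OF mn(2)] CN by linarith
      qed
    qed
  qed
  then obtain W where SW: "S \<longlonglongrightarrow> W" using Cauchy_convergent_iff convergent_def by blast
  have Enul: "E \<longlonglongrightarrow> 0"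
  proof (rule Lim_null_comparison)
    show "\<forall>\<^sub>F n in sequentially. norm (E n) \<le> r * (1/2) * (1/2)^n"
      using inv by (auto simp: t_def less_imp_le algebra_simps)
    show "(\<lambda>n. r * (1/2) * (1/2::real)^n) \<longlonglongrightarrow> 0"
      by (intro tendsto_mult_right_zero LIMSEQ_power_zero) simp
  qed
  have fstlim: "(\<lambda>n. fst (P n)) \<longlonglongrightarrow> (1 - 0) *\<^sub>R h + (y - 0)"
    unfolding fstP by (intro tendsto_intros Enul LIMSEQ_power_zero) simp
  have "(\<lambda>n. (fst (P n), snd (P n))) \<longlonglongrightarrow> (h + y, W)"
    using tendsto_Pair[OF fstlim SW[unfolded S_def]] by simp
  hence "P \<longlonglongrightarrow> (h + y, W)" by simp
  hence "(h + y, W) \<in> T" using closed_sequentially[OF clT] PT by blast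
  moreover have "norm W \<le> C"
  proof -
    have "norm (S n) \<le> C" for n
    proof -
      have "S 0 = 0" by (simp add: S_def P_def)
      moreover have "C * (1 - (1/2::real)^n) \<le> C" using C0 by (simp add: mult_left_le)
      ultimately show ?thesis using Sbd[of 0 n] by simp
    qed
    thus ?thesis using LIMSEQ_le_const2[OF tendsto_norm[OF SW]] by blast
  qed
  ultimately show ?thesis by blast
qed



lemma RU:
  fixes T :: "('a::{real_inner,complete_space} \<times> 'a) set"
  assumes clT: "closed T" and cvT: "convex T" and coT: "cone T" and hz0: "(h, z0) \<in> T"
    and clL: "closed L" and sL: "subspace L"
    and cover: "\<forall>y\<in>L. \<exists>s>0. \<exists>w. (h + s *\<^sub>R y, w) \<in> T"
  shows "\<exists>r>0. \<exists>M. \<forall>y\<in>L. norm y < r \<longrightarrow> (\<exists>w. (h + y, w) \<in> T \<and> norm w \<le> M)"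
proof -
  define A where "A k = {y \<in> L. \<exists>w. (h + y, w) \<in> T \<and> norm w \<le> real k + norm z0}" for k :: nat
  have AL: "A k \<subseteq> L" for k by (auto simp: A_def)
  have A0: "0 \<in> A k" for k using hz0 sL by (auto simp: A_def subspace_0)
  have Amono: "A k \<subseteq> A k'" if "k \<le> k'" for k k'
    using that by (auto simp: A_def)
  have Aconv: "(1 - l) *\<^sub>R u + l *\<^sub>R v \<in> A k" if H: "u \<in> A k" "v \<in> A k" "0 \<le> l" "l \<le> 1" for u v l k
  proof -
    obtain wu where wu: "(h + u, wu) \<in> T" "norm wu \<le> real k + norm z0" "u \<in> L"
      using H(1) by (auto simp: A_def)
    obtain wv where wv: "(h + v, wv) \<in> T" "norm wv \<le> real k + norm z0" "v \<in> L"
      using H(2) by (auto simp: A_def)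
    have "(1 - l) *\<^sub>R (h + u, wu) + l *\<^sub>R (h + v, wv) \<in> T"
      using convexD[OF cvT wu(1) wv(1), of "1-l" l] that by simp
    moreover have "(1 - l) *\<^sub>R (h + u, wu) + l *\<^sub>R (h + v, wv)
        = (h + ((1 - l) *\<^sub>R u + l *\<^sub>R v), (1 - l) *\<^sub>R wu + l *\<^sub>R wv)"
      by (simp add: algebra_simps)
    moreover have "norm ((1 - l) *\<^sub>R wu + l *\<^sub>R wv) \<le> real k + norm z0"
    proof -
      have "norm ((1 - l) *\<^sub>R wu + l *\<^sub>R wv) \<le> (1 - l) * norm wu + l * norm wv"
        using norm_triangle_ineq[of "(1 - l) *\<^sub>R wu" "l *\<^sub>R wv"] that(3,4) by simp
      also have "\<dots> \<le> (1 - l) * (real k + norm z0) + l * (real k + norm z0)"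
        using that(3,4) wu(2) wv(2) by (intro add_mono mult_left_mono) simp_all
      also have "\<dots> = real k + norm z0" by (simp add: algebra_simps)
      finally show ?thesis .
    qed
    moreover have "(1 - l) *\<^sub>R u + l *\<^sub>R v \<in> L"
      using sL wu(3) wv(3) by (simp add: subspace_add subspace_scale)
    ultimately show ?thesis unfolding A_def by auto
  qed
  have cover': "\<exists>k\<ge>1. \<exists>a\<in>A k. y = real k *\<^sub>R a" if yL: "y \<in> L" for y
  proof -
    obtain s where s: "s > 0" and "\<exists>w. (h + s *\<^sub>R y, w) \<in> T" using cover yL by blast
    then obtain w where sw: "(h + s *\<^sub>R y, w) \<in> T" by blast
    define k where "k = max 1 (max (nat \<lceil>norm w\<rceil>) (nat \<lceil>1/s\<rceil>))"
    have k1: "k \<ge> 1" by (simp add: k_def)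
    have kw: "norm w \<le> real k"
    proof -
      have "norm w \<le> real (nat \<lceil>norm w\<rceil>)" by (rule real_nat_ceiling_ge)
      also have "\<dots> \<le> real k"
      proof -
        have "nat \<lceil>norm w\<rceil> \<le> k" unfolding k_def by linarith
        thus ?thesis by (rule of_nat_mono)
      qed
      finally show ?thesis .
    qed
    have ks: "1/s \<le> real k"
    proof -
      have "1/s \<le> real (nat \<lceil>1/s\<rceil>)" by (rule real_nat_ceiling_ge)
      also have "\<dots> \<le> real k"
      proof -
        have "nat \<lceil>1/s\<rceil> \<le> k" unfolding k_def by linarith
        thus ?thesis by (rule of_nat_mono)
      qed
      finally show ?thesis .
    qed
    have syA: "s *\<^sub>R y \<in> A k"
    proof -
      have "norm w \<le> real k + norm z0" using kw norm_ge_zero[of z0] by linarith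
      thus ?thesis unfolding A_def using yL sw sL by (auto simp: subspace_scale)
    qed
    define l where "l = 1 / (real k * s)"
    have l0: "0 \<le> l" using s k1 by (simp add: l_def)
    have l1: "l \<le> 1" using ks s k1 by (simp add: l_def field_simps)
    have "(1 - l) *\<^sub>R 0 + l *\<^sub>R (s *\<^sub>R y) \<in> A k" using Aconv[OF A0 syA l0 l1] .
    hence "l *\<^sub>R (s *\<^sub>R y) \<in> A k" by simp
    moreover have "y = real k *\<^sub>R (l *\<^sub>R (s *\<^sub>R y))" using s k1 by (simp add: l_def)
    ultimately show ?thesis using k1 by blast
  qed
  define F where "F k = closure ((\<lambda>a. real k *\<^sub>R a) ` A k)" for k
  have FL: "F k \<subseteq> L" for k
    unfolding F_def using AL sL clL
    by (intro closure_minimal) (auto intro: subspace_scale)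
  define X where "X = top_of_set L"
  have cmX: "completely_metrizable_space X"
    unfolding X_def
    by (rule completely_metrizable_space_closedin[OF completely_metrizable_space_euclidean clL[unfolded closed_closedin]])
  have "\<exists>k\<ge>1. X interior_of F k \<noteq> {}"
  proof (rule ccontr)
    assume H: "\<not> ?thesis"
    have "X interior_of \<Union>(F ` {1..}) = {}"
    proof (rule Baire_category_alt)
      show "completely_metrizable_space X \<or> locally_compact_space X \<and> regular_space X" using cmX by blast
      show "countable (F ` {1..})" by simp
      fix S assume "S \<in> F ` {1..}"
      then obtain k where k: "k \<ge> 1" "S = F k" by auto
      have "closedin X S" unfolding X_def k(2)
        by (rule closed_subset[OF FL[of k]]) (simp add: F_def)
      thus "closedin X S \<and> X interior_of S = {}" using H k by blast
    qed
    moreover have "\<Union>(F ` {1..}) = L"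
    proof
      show "\<Union>(F ` {1..}) \<subseteq> L" using FL by blast
      show "L \<subseteq> \<Union>(F ` {1..})"
      proof
        fix y assume "y \<in> L"
        then obtain k a where "k \<ge> 1" "a \<in> A k" "y = real k *\<^sub>R a" using cover' by blast
        hence "y \<in> (\<lambda>a. real k *\<^sub>R a) ` A k" by (simp add: image_eqI)
        hence "y \<in> F k" unfolding F_def by (rule subsetD[OF closure_subset])
        thus "y \<in> \<Union>(F ` {1..})" using \<open>k \<ge> 1\<close> by auto
      qed
    qed
    moreover have "X interior_of L = L" unfolding X_def by (metis interior_of_topspace topspace_euclidean_subtopology)
    moreover have "L \<noteq> {}" using sL subspace_0 by blast
    ultimately show False by simp
  qed
  then obtain k y0 where k1: "k \<ge> 1" and y0: "y0 \<in> X interior_of F k" by blast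
  obtain U where U: "openin X U" "y0 \<in> U" "U \<subseteq> F k"
    using y0 unfolding interior_of_def by blast
  have y0L: "y0 \<in> L" using U FL by blast
  obtain \<epsilon> where e0: "\<epsilon> > 0" and eU: "\<forall>x'\<in>L. dist x' y0 < \<epsilon> \<longrightarrow> x' \<in> U"
    using U(1,2) unfolding X_def openin_euclidean_subtopology_iff by blast
  have "- y0 \<in> L" using y0L sL by (simp add: subspace_neg)
  then obtain j v where j1: "j \<ge> 1" and vA: "v \<in> A j" and vy0: "- y0 = real j *\<^sub>R v"
    using cover' by blast
  define m where "m = max k j"
  have kj: "real k + real j > 0" using k1 by simp
  define r where "r = \<epsilon> / (real k + real j)"
  have r0: "r > 0" using e0 kj by (simp add: r_def)
  have approx: "\<forall>y\<in>L. norm y < r \<longrightarrow> (\<forall>\<delta>>0. \<exists>a\<in>A m. norm (y - a) < \<delta>)"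
  proof (intro ballI impI allI)
    fix y \<delta> assume yL: "y \<in> L" and yr: "norm y < r" and d0: "(\<delta>::real) > 0"
    define Y where "Y = (real k + real j) *\<^sub>R y"
    have YL: "y0 + Y \<in> L" using yL y0L sL by (simp add: Y_def subspace_add subspace_scale)
    have "norm Y = (real k + real j) * norm y" using kj by (simp add: Y_def)
    also have "\<dots> < (real k + real j) * r" using yr kj by (intro mult_strict_left_mono) 
    also have "\<dots> = \<epsilon>" using kj by (simp add: r_def)
    finally have "norm Y < \<epsilon>" .
    hence "y0 + Y \<in> U" using eU YL by (simp add: dist_norm)
    hence "y0 + Y \<in> F k" using U(3) by blast
    then obtain b where b: "b \<in> (\<lambda>a. real k *\<^sub>R a) ` A k" "dist b (y0 + Y) < \<delta> * (real k + real j)"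
      unfolding F_def closure_approachable using d0 kj by (meson mult_pos_pos)
    then obtain u where uA: "u \<in> A k" and bu: "b = real k *\<^sub>R u" by blast
    define l where "l = real j / (real k + real j)"
    have l0: "0 \<le> l" "l \<le> 1" using kj by (auto simp: l_def)
    have "(1 - l) *\<^sub>R u + l *\<^sub>R v \<in> A m"
      using Aconv[of u m v l] Amono[of k m] Amono[of j m] uA vA l0 by (auto simp: m_def)
    moreover have "norm (y - ((1 - l) *\<^sub>R u + l *\<^sub>R v)) < \<delta>"
    proof -
      have 1: "1 - l = real k / (real k + real j)" using kj by (simp add: l_def field_simps)
      have kj0: "real k + real j \<noteq> 0" using kj by simp
      have c1: "(real k + real j) * (real k / (real k + real j)) = real k" using kj0 by simp
      have c2: "(real k + real j) * (real j / (real k + real j)) = real j" using kj0 by simp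
      have "(real k + real j) *\<^sub>R ((1 - l) *\<^sub>R u + l *\<^sub>R v) = real k *\<^sub>R u + real j *\<^sub>R v"
        unfolding 1 unfolding l_def scaleR_add_right scaleR_scaleR c1 c2 by simp
      hence "(real k + real j) *\<^sub>R (y - ((1 - l) *\<^sub>R u + l *\<^sub>R v)) = Y - b - real j *\<^sub>R v"
        unfolding Y_def bu by (simp add: scaleR_diff_right algebra_simps)
      also have "\<dots> = (y0 + Y) - b" using vy0[symmetric] by (simp add: algebra_simps)
      finally have eq: "(real k + real j) *\<^sub>R (y - ((1 - l) *\<^sub>R u + l *\<^sub>R v)) = y0 + Y - b" .
      have "(real k + real j) * norm (y - ((1 - l) *\<^sub>R u + l *\<^sub>R v))
          = norm ((real k + real j) *\<^sub>R (y - ((1 - l) *\<^sub>R u + l *\<^sub>R v)))" using kj by simp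
      also have "\<dots> = dist b (y0 + Y)" unfolding eq by (simp add: dist_norm norm_minus_commute)
      finally have "(real k + real j) * norm (y - ((1 - l) *\<^sub>R u + l *\<^sub>R v)) = dist b (y0 + Y)" .
      hence "(real k + real j) * norm (y - ((1 - l) *\<^sub>R u + l *\<^sub>R v)) < (real k + real j) * \<delta>"
        using b(2) by (simp add: mult.commute)
      thus ?thesis using kj mult_less_cancel_left_pos by blast
    qed
    ultimately show "\<exists>a\<in>A m. norm (y - a) < \<delta>" by blast
  qed
  have Aw: "\<forall>a\<in>A m. \<exists>w. (h + a, w) \<in> T \<and> norm w \<le> real m + norm z0" by (auto simp: A_def)
  have "\<forall>y\<in>L. norm y < r/2 \<longrightarrow> (\<exists>w. (h + y, w) \<in> T \<and> norm w \<le> real m + norm z0)"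
    using removal[OF clT cvT coT sL AL[of m] Aw approx r0] by blast
  thus ?thesis using r0 by (meson half_gt_zero)
qed



lemma dir1:
  fixes T :: "('a::{real_inner,complete_space} \<times> 'a) set"
  assumes clT: "closed T" and cvT: "convex T" and coT: "cone T"
    and b0: "\<beta> > 0" and beta: "\<forall>(h, z)\<in>polar T. norm z = 1 \<longrightarrow> inner h z \<le> - \<beta>"
    and hS: "h \<in> sphere 0 1" and hD: "h \<in> sqri (proj_h T)"
  shows "\<exists>z. (h, z) \<in> T \<and> inner h z \<ge> \<beta>/2"
proof -
  define D where "D = proj_h T"
  define L where "L = cone hull ((\<lambda>a. a - h) ` D)"
  have h1: "norm h = 1" using hS by simp
  have hD': "h \<in> D" and clL: "closed L" and sL: "subspace L"
    using hD unfolding sqri_def D_def L_def by auto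
  obtain zh where zh: "(h, zh) \<in> T" using hD' unfolding D_def proj_h_def by blast
  have DL: "x - h \<in> L" if "x \<in> D" for x
    unfolding L_def using that by (intro hull_inc) blast
  have cover: "\<forall>y\<in>L. \<exists>s>0. \<exists>w. (h + s *\<^sub>R y, w) \<in> T"
  proof
    fix y assume "y \<in> L"
    then obtain c d where c: "c \<ge> 0" and dD: "d \<in> D" and yc: "y = c *\<^sub>R (d - h)"
      unfolding L_def cone_hull_expl by blast
    obtain wd where wd: "(d, wd) \<in> T" using dD unfolding D_def proj_h_def by blast
    define s where "s = 1 / (1 + c)"
    have s0: "s > 0" "s \<le> 1" using c by (auto simp: s_def)
    have "s *\<^sub>R (h, zh) + (1 - s) *\<^sub>R (d, wd) \<in> T"
      using convexD[OF cvT zh wd, of s "1 - s"] s0 by simp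
    moreover have "s *\<^sub>R h + (1 - s) *\<^sub>R d = h + (s * c) *\<^sub>R (d - h)"
    proof -
      have e: "s * c = 1 - s" using c by (simp add: s_def field_simps)
      show ?thesis unfolding e by (simp add: algebra_simps)
    qed
    ultimately have "(h + (s * c) *\<^sub>R (d - h), s *\<^sub>R zh + (1 - s) *\<^sub>R wd) \<in> T" by simp
    hence "(h + s *\<^sub>R y, s *\<^sub>R zh + (1 - s) *\<^sub>R wd) \<in> T" by (simp add: yc mult.commute)
    thus "\<exists>s>0. \<exists>w. (h + s *\<^sub>R y, w) \<in> T" using s0 by blast
  qed
  obtain r M where r0: "r > 0" and RU: "\<forall>y\<in>L. norm y < r \<longrightarrow> (\<exists>w. (h + y, w) \<in> T \<and> norm w \<le> M)"
    using RU[OF clT cvT coT zh clL sL cover] by blast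
  have M0: "M \<ge> 0"
  proof -
    have "0 \<in> L" using sL subspace_0 by blast
    have "\<exists>w. (h + 0, w) \<in> T \<and> norm w \<le> M" using RU[rule_format, OF \<open>0 \<in> L\<close>] r0 by simp
    then obtain w :: 'a where "norm w \<le> M" by blast
    thus ?thesis using norm_ge_zero order_trans by blast
  qed
  define S where "S = {(x, s::real). \<exists>z. (x, z) \<in> T \<and> s \<le> inner h z}"
  define K where "K = closure S"
  define p where "p = (h, 3 * \<beta> / 4)"
  have Sc: "convex S"
  proof (rule convexI)
    fix u v and a b :: real assume uv: "u \<in> S" "v \<in> S" "0 \<le> a" "0 \<le> b" "a + b = 1"
    obtain x1 s1 z1 where u: "u = (x1, s1)" "(x1, z1) \<in> T" "s1 \<le> inner h z1" using uv(1) unfolding S_def by blast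
    obtain x2 s2 z2 where v: "v = (x2, s2)" "(x2, z2) \<in> T" "s2 \<le> inner h z2" using uv(2) unfolding S_def by blast
    have "a *\<^sub>R (x1, z1) + b *\<^sub>R (x2, z2) \<in> T" using convexD[OF cvT u(2) v(2) uv(3-5)] .
    hence "(a *\<^sub>R x1 + b *\<^sub>R x2, a *\<^sub>R z1 + b *\<^sub>R z2) \<in> T" by simp
    moreover have "a * s1 + b * s2 \<le> inner h (a *\<^sub>R z1 + b *\<^sub>R z2)"
      using u(3) v(3) uv(3,4) by (simp add: inner_add_right add_mono mult_left_mono)
    ultimately show "a *\<^sub>R u + b *\<^sub>R v \<in> S" unfolding S_def u v by auto
  qed
  have Scone: "cone S"
    unfolding cone_def
  proof (intro ballI allI impI)
    fix u and c :: real assume "u \<in> S" "c \<ge> 0"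
    then obtain x s z where u: "u = (x, s)" "(x, z) \<in> T" "s \<le> inner h z" unfolding S_def by blast
    have "c *\<^sub>R (x, z) \<in> T" using mem_cone[OF coT u(2) \<open>c \<ge> 0\<close>] .
    moreover have "c * s \<le> inner h (c *\<^sub>R z)" using u(3) \<open>c \<ge> 0\<close> by (simp add: mult_left_mono)
    ultimately show "c *\<^sub>R u \<in> S" unfolding S_def u by auto
  qed
  show ?thesis
  proof (cases "p \<in> K")
    case True
    define \<epsilon> where "\<epsilon> = \<beta> / (5 * \<beta> + 8 * M + 8)"
    have e0: "\<epsilon> > 0" and e1: "\<epsilon> < 1" using b0 M0 by (auto simp: \<epsilon>_def)
    have eb: "\<epsilon> * (5 * \<beta> + 8 * M) \<le> \<beta>"
    proof -
      have "\<epsilon> * (5 * \<beta> + 8 * M) \<le> \<epsilon> * (5 * \<beta> + 8 * M + 8)" using e0 by simp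
      also have "\<dots> = \<beta>" using b0 M0 by (simp add: \<epsilon>_def)
      finally show ?thesis .
    qed
    define \<eta> where "\<eta> = min (\<beta>/8) (\<epsilon> * r / 2)"
    have n0: "\<eta> > 0" using b0 e0 r0 by (simp add: \<eta>_def)
    obtain q where qS: "q \<in> S" and qd: "dist q p < \<eta>"
      using True n0 unfolding K_def closure_approachable by blast
    obtain x s z where q: "q = (x, s)" and xz: "(x, z) \<in> T" and sz: "s \<le> inner h z"
      using qS unfolding S_def by blast
    have dx: "norm (h - x) < \<eta>"
      using dist_fst_le[of q p] qd by (simp add: q p_def dist_norm norm_minus_commute)
    have ds: "\<bar>s - 3 * \<beta> / 4\<bar> < \<eta>"
      using dist_snd_le[of q p] qd by (simp add: q p_def dist_real_def)
    have s58: "s \<ge> 5 * \<beta> / 8" using ds unfolding \<eta>_def by linarith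
    define y where "y = ((1 - \<epsilon>) / \<epsilon>) *\<^sub>R (h - x)"
    have xD: "x \<in> D" using xz unfolding D_def proj_h_def by blast
    have yL: "y \<in> L"
    proof -
      have "- (x - h) \<in> L" using subspace_neg[OF sL DL[OF xD]] .
      hence "h - x \<in> L" by simp
      thus ?thesis unfolding y_def using sL by (simp add: subspace_scale)
    qed
    have yr: "norm y < r"
    proof -
      have "norm y = ((1 - \<epsilon>) / \<epsilon>) * norm (h - x)" using e0 e1 by (simp add: y_def)
      also have "\<dots> \<le> ((1 - \<epsilon>) / \<epsilon>) * (\<epsilon> * r / 2)"
        using dx e0 e1 unfolding \<eta>_def by (intro mult_left_mono) auto
      also have "\<dots> = (1 - \<epsilon>) * r / 2" using e0 by simp
      also have "\<dots> < r" using e0 r0 by (simp add: field_simps add_pos_pos)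
      finally show ?thesis .
    qed
    obtain w where hw: "(h + y, w) \<in> T" and wM: "norm w \<le> M" using RU yL yr by blast
    have "(1 - \<epsilon>) *\<^sub>R (x, z) + \<epsilon> *\<^sub>R (h + y, w) \<in> T"
      using convexD[OF cvT xz hw, of "1 - \<epsilon>" \<epsilon>] e0 e1 by simp
    moreover have "(1 - \<epsilon>) *\<^sub>R x + \<epsilon> *\<^sub>R (h + y) = h"
    proof -
      have "\<epsilon> *\<^sub>R y = (1 - \<epsilon>) *\<^sub>R (h - x)" using e0 by (simp add: y_def)
      thus ?thesis by (simp add: algebra_simps)
    qed
    ultimately have hz': "(h, (1 - \<epsilon>) *\<^sub>R z + \<epsilon> *\<^sub>R w) \<in> T" by simp
    have hw1: "inner h w \<ge> - M"
    proof -
      have "\<bar>inner h w\<bar> \<le> norm h * norm w" by (rule Cauchy_Schwarz_ineq2)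
      thus ?thesis using h1 wM by simp
    qed
    have "inner h ((1 - \<epsilon>) *\<^sub>R z + \<epsilon> *\<^sub>R w) = (1 - \<epsilon>) * inner h z + \<epsilon> * inner h w"
      by (simp add: inner_add_right)
    also have "\<dots> \<ge> (1 - \<epsilon>) * (5 * \<beta> / 8) + \<epsilon> * (- M)"
      using sz s58 hw1 e0 e1 by (intro add_mono mult_left_mono) auto
    finally have "inner h ((1 - \<epsilon>) *\<^sub>R z + \<epsilon> *\<^sub>R w) \<ge> (1 - \<epsilon>) * (5 * \<beta> / 8) + \<epsilon> * (- M)" .
    moreover have "(1 - \<epsilon>) * (5 * \<beta> / 8) + \<epsilon> * (- M) \<ge> \<beta> / 2"
      using eb by (simp add: algebra_simps)
    ultimately show ?thesis using hz' by (meson order_trans)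
  next
    case False
    have SK: "S \<subseteq> K" unfolding K_def by (rule closure_subset)
    have "(h, inner h zh) \<in> S" unfolding S_def using zh by blast
    hence Kne: "K \<noteq> {}" using SK by blast
    have "closed K" "convex K" "cone K" unfolding K_def
      using convex_closure[OF Sc] cone_closure[OF Scone] by simp_all
    then obtain c where c1: "\<forall>k\<in>K. inner c k \<le> 0" and c2: "inner c p > 0"
      using cone_separation[OF _ _ _ Kne False] by blast
    obtain a l where c: "c = (a, l)" by (cases c)
    have pos: "inner a h + l * (3 * \<beta> / 4) > 0" using c2 by (simp add: c p_def)
    have ineq: "inner a x + l * inner h z \<le> 0" if "(x, z) \<in> T" for x z
    proof -
      have "(x, inner h z) \<in> S" unfolding S_def using that by auto
      hence "inner c (x, inner h z) \<le> 0" using c1 SK by blast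
      thus ?thesis by (simp add: c)
    qed
    have l0: "l > 0"
    proof (rule ccontr)
      assume "\<not> l > 0"
      hence lle: "l \<le> 0" by simp
      define t where "t = min (3 * \<beta> / 4) (inner h zh)"
      have "(h, t) \<in> S" unfolding S_def t_def using zh by auto
      hence "inner c (h, t) \<le> 0" using c1 SK by blast
      hence "inner a h + l * t \<le> 0" by (simp add: c)
      moreover have "l * t \<ge> l * (3 * \<beta> / 4)" using lle by (intro mult_left_mono_neg) (auto simp: t_def)
      ultimately show False using pos by linarith
    qed
    have "((1/l) *\<^sub>R a, h) \<in> polar T"
      unfolding polar_def
    proof (clarify)
      fix x z assume "(x, z) \<in> T"
      hence "inner a x + l * inner h z \<le> 0" by (rule ineq)
      hence "(1/l) * (inner a x + l * inner h z) \<le> 0" using l0 by (simp add: divide_nonpos_pos)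
      thus "inner ((1/l) *\<^sub>R a) x + inner h z \<le> 0" using l0 by (simp add: algebra_simps)
    qed
    hence "inner ((1/l) *\<^sub>R a) h \<le> - \<beta>" using beta h1 by blast
    hence "inner a h \<le> - \<beta> * l" using l0 by (simp add: field_simps)
    moreover have "\<beta> * l > 0" using b0 l0 by simp
    moreover have "l * (3 * \<beta> / 4) = (3/4) * (\<beta> * l)" by simp
    ultimately have False using pos by linarith
    thus ?thesis ..
  qed
qed



lemma cc_neg_subspace:
  fixes K :: "'a::real_vector set"
  assumes cv: "convex K" and co: "cone K" and ne: "K \<noteq> {}" and neg: "\<forall>v\<in>K. -v \<in> K"
  shows "subspace K"
  unfolding subspace_def
proof (intro conjI ballI allI)
  show "0 \<in> K" using co ne cone_contains_0 by blast
next
  fix x y assume "x \<in> K" "y \<in> K" thus "x + y \<in> K" by (rule convex_cone_add[OF cv co])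
next
  fix c :: real and x assume xK: "x \<in> K"
  show "c *\<^sub>R x \<in> K"
  proof (cases "c \<ge> 0")
    case True thus ?thesis using mem_cone[OF co xK] by blast
  next
    case False
    have "-x \<in> K" using neg xK by blast
    from mem_cone[OF co this, of "-c"] False have "(-c) *\<^sub>R (-x) \<in> K" by simp
    thus ?thesis by simp
  qed
qed

lemma closure_neg_closed:
  fixes P :: "'a::real_normed_vector set"
  assumes "\<forall>v\<in>P. -v \<in> closure P"
  shows "\<forall>v\<in>closure P. -v \<in> closure P"
proof -
  have "P \<subseteq> uminus ` closure P"
  proof
    fix v assume "v \<in> P"
    hence "-v \<in> closure P" using assms by blast
    thus "v \<in> uminus ` closure P" by (rule image_eqI[rotated]) simp
  qed
  hence "closure P \<subseteq> uminus ` closure P"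
    by (intro closure_minimal closed_negations closed_closure)
  show ?thesis
  proof
    fix v assume "v \<in> closure P"
    then obtain w where "w \<in> closure P" "v = - w" using \<open>closure P \<subseteq> uminus ` closure P\<close> by blast
    thus "-v \<in> closure P" by simp
  qed
qed

lemma qri_snd:
  fixes N :: "('a::real_normed_vector \<times> 'a) set"
  assumes cvN: "convex N" and xq: "x \<in> qri N"
  shows "snd x \<in> qri (snd ` N)"
proof -
  define C where "C = cone hull ((\<lambda>a. a - x) ` N)"
  define C' where "C' = cone hull ((\<lambda>a. a - snd x) ` snd ` N)"
  have xN: "x \<in> N" and sC: "subspace (closure C)" using xq unfolding qri_def C_def by auto
  have CC': "C' \<subseteq> snd ` C"
  proof
    fix v assume "v \<in> C'"
    then obtain c y where cy: "c \<ge> 0" "y \<in> (\<lambda>a. a - snd x) ` snd ` N" "v = c *\<^sub>R y"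
      unfolding C'_def cone_hull_expl by blast
    then obtain u where "u \<in> N" "y = snd u - snd x" by blast
    hence c: "c \<ge> 0" "u \<in> N" "v = c *\<^sub>R (snd u - snd x)" using cy by auto
    have "c *\<^sub>R (u - x) \<in> C" unfolding C_def using c by (intro mem_cone_hull) auto
    moreover have "snd (c *\<^sub>R (u - x)) = v" using c by simp
    ultimately show "v \<in> snd ` C" using image_eqI[of v snd "c *\<^sub>R (u - x)" C] by simp
  qed
  have cvC': "convex C'" unfolding C'_def
    by (intro convex_cone_hull convex_translation_subtract convex_linear_image[OF linear_snd cvN])
  have coC': "cone C'" unfolding C'_def by (rule cone_cone_hull)
  have "snd x \<in> snd ` N" using xN by (rule imageI)
  hence "snd x - snd x \<in> (\<lambda>a. a - snd x) ` snd ` N" by (rule imageI)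
  hence "snd x - snd x \<in> C'" unfolding C'_def by (rule hull_inc)
  hence neC': "C' \<noteq> {}" by blast
  have neg: "\<forall>v\<in>C'. -v \<in> closure C'"
  proof
    fix v assume "v \<in> C'"
    then obtain u where u: "u \<in> C" "v = snd u" using CC' by blast
    have "u \<in> closure C" using u(1) closure_subset by blast
    hence "-u \<in> closure C" using sC by (simp add: subspace_neg)
    hence "snd (-u) \<in> snd ` closure C" by blast
    also have "\<dots> \<subseteq> closure (snd ` C)" by (rule closure_bounded_linear_image_subset[OF bounded_linear_snd])
    also have "\<dots> \<subseteq> closure C'"
    proof -
      have "snd ` C \<subseteq> C'"
      proof
        fix v assume "v \<in> snd ` C"
        then obtain u where "u \<in> C" "v = snd u" by blast
        then obtain c y where cy: "c \<ge> 0" "y \<in> (\<lambda>a. a - x) ` N" "u = c *\<^sub>R y" unfolding C_def cone_hull_expl by blast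
        then obtain a where a: "a \<in> N" "y = a - x" by blast
        hence "v = c *\<^sub>R (snd a - snd x)" using \<open>v = snd u\<close> cy by simp
        moreover have "c *\<^sub>R (snd a - snd x) \<in> C'" unfolding C'_def using cy(1) a(1) by (intro mem_cone_hull) auto
        ultimately show "v \<in> C'" by simp
      qed
      thus ?thesis by (rule closure_mono)
    qed
    finally show "-v \<in> closure C'" using u(2) by simp
  qed
  have "closure C' \<noteq> {}" using neC' by simp
  hence "subspace (closure C')"
    by (rule cc_neg_subspace[OF convex_closure[OF cvC'] cone_closure[OF coC'] _ closure_neg_closed[OF neg]])
  moreover have "snd x \<in> snd ` N" using xN by blast
  ultimately show ?thesis unfolding qri_def C'_def by simp
qed

lemma qri_segment:
  fixes C :: "'a::real_normed_vector set"
  assumes cvC: "convex C" and x0q: "x0 \<in> qri C" and xC: "x \<in> C" and s0: "0 < s" and s1: "s \<le> 1"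
  shows "(1 - s) *\<^sub>R x + s *\<^sub>R x0 \<in> qri C"
proof -
  define y where "y = (1 - s) *\<^sub>R x + s *\<^sub>R x0"
  define Q where "Q = closure (cone hull ((\<lambda>a. a - x0) ` C))"
  have x0C: "x0 \<in> C" and K0: "subspace Q" using x0q unfolding qri_def Q_def by auto
  have yC: "y \<in> C" using convexD[OF cvC xC x0C, of "1 - s" s] s0 s1 by (simp add: y_def)
  define P where "P = cone hull ((\<lambda>a. a - y) ` C)"
  have cvP: "convex P" unfolding P_def by (intro convex_cone_hull convex_translation_subtract cvC)
  have coP: "cone P" unfolding P_def by (rule cone_cone_hull)
  have inP: "c - y \<in> P" if "c \<in> C" for c unfolding P_def using that by (intro hull_inc) blast
  have key: "(1 - s) *\<^sub>R (x - x0) \<in> P"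
  proof -
    have "x - y = s *\<^sub>R (x - x0)" by (simp add: y_def algebra_simps)
    hence "(1 - s) *\<^sub>R (x - x0) = ((1 - s) / s) *\<^sub>R (x - y)" using s0 by simp
    moreover have "((1 - s) / s) *\<^sub>R (x - y) \<in> P" using mem_cone[OF coP inP[OF xC]] s0 s1 by simp
    ultimately show ?thesis by simp
  qed
  have sub1: "c - x0 \<in> P" if "c \<in> C" for c
  proof -
    have e: "c - x0 = (c - y) + (1 - s) *\<^sub>R (x - x0)" by (simp add: y_def algebra_simps)
    show ?thesis unfolding e by (rule convex_cone_add[OF cvP coP inP[OF that] key])
  qed
  have "cone hull ((\<lambda>a. a - x0) ` C) \<subseteq> P" by (rule hull_minimal) (use sub1 coP in auto)
  hence QP: "Q \<subseteq> closure P" unfolding Q_def by (rule closure_mono)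
  have cvP': "convex (closure P)" and coP': "cone (closure P)"
    using convex_closure[OF cvP] cone_closure[OF coP] .
  have neg: "\<forall>v\<in>P. -v \<in> closure P"
  proof
    fix v assume "v \<in> P"
    then obtain t c where t: "t \<ge> 0" "c \<in> C" "v = t *\<^sub>R (c - y)" unfolding P_def cone_hull_expl by blast
    have "c - x0 \<in> Q" unfolding Q_def using t(2) by (intro subsetD[OF closure_subset] hull_inc) blast
    hence "-(c - x0) \<in> closure P" using subspace_neg[OF K0] QP by blast
    moreover have "(1 - s) *\<^sub>R (x - x0) \<in> closure P" using key closure_subset by blast
    ultimately have "-(c - x0) + (1 - s) *\<^sub>R (x - x0) \<in> closure P" by (rule convex_cone_add[OF cvP' coP'])
    moreover have e2: "-(c - y) = -(c - x0) + (1 - s) *\<^sub>R (x - x0)" by (simp add: y_def algebra_simps)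
    ultimately have "-(c - y) \<in> closure P" by (simp only: e2)
    hence "t *\<^sub>R (-(c - y)) \<in> closure P" using mem_cone[OF coP'] t(1) by blast
    moreover have "-v = t *\<^sub>R (-(c - y))" using t(3) by (simp only: scaleR_minus_right)
    ultimately show "-v \<in> closure P" by simp
  qed
  have "P \<noteq> {}" using inP[OF yC] by blast
  hence "closure P \<noteq> {}" by simp
  hence "subspace (closure P)"
    by (rule cc_neg_subspace[OF cvP' coP' _ closure_neg_closed[OF neg]])
  thus ?thesis using yC unfolding qri_def P_def y_def by simp
qed

lemma sqri_scale:
  fixes D :: "'a::real_normed_vector set"
  assumes coD: "cone D" and hq: "h \<in> sqri D" and c0: "c > 0"
  shows "c *\<^sub>R h \<in> sqri D"
proof -
  have hD: "h \<in> D" using hq unfolding sqri_def by auto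
  have eq: "cone hull ((\<lambda>a. a - c *\<^sub>R h) ` D) = cone hull ((\<lambda>a. a - h) ` D)"
  proof (rule antisym)
    show "cone hull ((\<lambda>a. a - c *\<^sub>R h) ` D) \<subseteq> cone hull ((\<lambda>a. a - h) ` D)"
    proof (rule hull_minimal)
      show "(\<lambda>a. a - c *\<^sub>R h) ` D \<subseteq> cone hull ((\<lambda>a. a - h) ` D)"
      proof
        fix v assume "v \<in> (\<lambda>a. a - c *\<^sub>R h) ` D"
        then obtain a where a: "a \<in> D" "v = a - c *\<^sub>R h" by blast
        have "(1/c) *\<^sub>R a \<in> D" using mem_cone[OF coD a(1)] c0 by simp
        hence "c *\<^sub>R ((1/c) *\<^sub>R a - h) \<in> cone hull ((\<lambda>a. a - h) ` D)"
          using c0 by (intro mem_cone_hull) auto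
        moreover have "c *\<^sub>R ((1/c) *\<^sub>R a - h) = v" using c0 a(2) by (simp add: algebra_simps)
        ultimately show "v \<in> cone hull ((\<lambda>a. a - h) ` D)" by simp
      qed
    qed (rule cone_cone_hull)
    show "cone hull ((\<lambda>a. a - h) ` D) \<subseteq> cone hull ((\<lambda>a. a - c *\<^sub>R h) ` D)"
    proof (rule hull_minimal)
      show "(\<lambda>a. a - h) ` D \<subseteq> cone hull ((\<lambda>a. a - c *\<^sub>R h) ` D)"
      proof
        fix v assume "v \<in> (\<lambda>a. a - h) ` D"
        then obtain a where a: "a \<in> D" "v = a - h" by blast
        have "c *\<^sub>R a \<in> D" using mem_cone[OF coD a(1)] c0 by simp
        hence "(1/c) *\<^sub>R (c *\<^sub>R a - c *\<^sub>R h) \<in> cone hull ((\<lambda>a. a - c *\<^sub>R h) ` D)"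
          using c0 by (intro mem_cone_hull) auto
        moreover have "(1/c) *\<^sub>R (c *\<^sub>R a - c *\<^sub>R h) = v" using c0 a(2) by (simp add: algebra_simps)
        ultimately show "v \<in> cone hull ((\<lambda>a. a - c *\<^sub>R h) ` D)" by simp
      qed
    qed (rule cone_cone_hull)
  qed
  have "c *\<^sub>R h \<in> D" using mem_cone[OF coD hD] c0 by simp
  thus ?thesis using hq unfolding sqri_def by (simp add: eq)
qed



lemma proj_z_eq: "proj_z S = snd ` S"
  unfolding proj_z_def by force

lemma proj_h_cone:
  assumes "cone T" shows "cone (proj_h T)"
  unfolding cone_def proj_h_def
proof (intro ballI allI impI)
  fix x and c :: real assume "x \<in> {h. \<exists>z. (h, z) \<in> T}" "c \<ge> 0"
  then obtain z where "(x, z) \<in> T" by blast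
  hence "c *\<^sub>R (x, z) \<in> T" using mem_cone[OF assms] \<open>c \<ge> 0\<close> by blast
  thus "c *\<^sub>R x \<in> {h. \<exists>z. (h, z) \<in> T}" by auto
qed

lemma polar_convex: "convex (polar T)"
proof (rule convexI)
  fix u v and a b :: real
  assume uv: "u \<in> polar T" "v \<in> polar T" "0 \<le> a" "0 \<le> b" "a + b = 1"
  obtain a1 b1 where u: "u = (a1, b1)" by (cases u)
  obtain a2 b2 where v: "v = (a2, b2)" by (cases v)
  have "inner (a *\<^sub>R a1 + b *\<^sub>R a2) h + inner (a *\<^sub>R b1 + b *\<^sub>R b2) z \<le> 0" if hz: "(h, z) \<in> T" for h z
  proof -
    have 1: "inner a1 h + inner b1 z \<le> 0" using uv(1) hz unfolding u polar_def by blast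
    have 2: "inner a2 h + inner b2 z \<le> 0" using uv(2) hz unfolding v polar_def by blast
    have "a * (inner a1 h + inner b1 z) + b * (inner a2 h + inner b2 z) \<le> 0"
      using 1 2 uv(3,4) by (simp add: add_nonpos_nonpos mult_nonneg_nonpos)
    thus ?thesis by (simp add: inner_add_left algebra_simps)
  qed
  thus "a *\<^sub>R u + b *\<^sub>R v \<in> polar T" unfolding polar_def u v by auto
qed

lemma dir2:
  fixes T :: "('a::{real_inner,complete_space} \<times> 'a) set"
  assumes coT: "cone T"
    and qne: "qri (polar T) \<noteq> {}" and qsub: "qri (proj_z (polar T)) \<subseteq> sqri (proj_h T)"
    and b1: "\<beta>\<^sub>1 > 0" and ii: "\<forall>h \<in> sphere 0 1 \<inter> sqri (proj_h T). \<exists>z. (h, z) \<in> T \<and> inner h z \<ge> \<beta>\<^sub>1"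
  shows "\<forall>(a, b)\<in>polar T. norm b = 1 \<longrightarrow> inner a b \<le> - \<beta>\<^sub>1"
proof (clarify)
  fix a b assume abN: "(a, b) \<in> polar T" and nb: "norm b = 1"
  define N where "N = polar T"
  have cvN: "convex N" unfolding N_def by (rule polar_convex)
  obtain x0 where x0: "x0 \<in> qri N" using qne unfolding N_def by blast
  obtain a0 b0 where x0e: "x0 = (a0, b0)" by (cases x0)
  have x0N: "(a0, b0) \<in> N" using x0 x0e unfolding qri_def by auto
  have b0q: "b0 \<in> qri (snd ` N)" using qri_snd[OF cvN x0] x0e by simp
  have coD: "cone (proj_h T)" by (rule proj_h_cone[OF coT])
  define as where "as s = (1 - s) *\<^sub>R a + s *\<^sub>R a0" for s :: real
  define bs where "bs s = (1 - s) *\<^sub>R b + s *\<^sub>R b0" for s :: real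
  have key: "inner (as s) (bs s) + \<beta>\<^sub>1 * norm (bs s)^2 \<le> 0" if s: "0 < s" "s \<le> 1" for s
  proof -
    have "b \<in> snd ` N" using abN unfolding N_def by force
    moreover have "convex (snd ` N)" by (rule convex_linear_image[OF linear_snd cvN])
    ultimately have "bs s \<in> qri (snd ` N)" unfolding bs_def using qri_segment[OF _ b0q _ s] by blast
    hence bsD: "bs s \<in> sqri (proj_h T)" using qsub unfolding N_def proj_z_eq by blast
    have asbsN: "(as s, bs s) \<in> polar T"
    proof -
      have "(1 - s) *\<^sub>R (a, b) + s *\<^sub>R (a0, b0) \<in> N"
        using convexD[OF cvN abN[folded N_def] x0N, of "1 - s" s] s by simp
      thus ?thesis unfolding as_def bs_def N_def by simp
    qed
    show ?thesis
    proof (cases "bs s = 0")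
      case True thus ?thesis by simp
    next
      case False
      define n where "n = norm (bs s)"
      have n0: "n > 0" using False by (simp add: n_def)
      define u where "u = (1 / n) *\<^sub>R bs s"
      have uD: "u \<in> sqri (proj_h T)" unfolding u_def using sqri_scale[OF coD bsD, of "1/n"] n0 by simp
      have un: "norm u = 1" using n0 by (simp add: u_def n_def)
      obtain z where uz: "(u, z) \<in> T" and uzb: "inner u z \<ge> \<beta>\<^sub>1" using ii uD un by force
      have pol: "inner (as s) u + inner (bs s) z \<le> 0" using asbsN uz unfolding polar_def by blast
      have bsu: "bs s = n *\<^sub>R u" using n0 by (simp add: u_def)
      have "inner (bs s) z = n * inner u z" by (simp add: bsu)
      hence "inner (bs s) z \<ge> n * \<beta>\<^sub>1" using uzb n0 by simp
      hence "inner (as s) u \<le> - (n * \<beta>\<^sub>1)" using pol by linarith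
      hence "n * inner (as s) u \<le> n * (- (n * \<beta>\<^sub>1))" using n0 by (intro mult_left_mono) simp_all
      moreover have "inner (as s) (bs s) = n * inner (as s) u" by (simp add: bsu)
      moreover have "norm (bs s)^2 = n * n" by (simp add: n_def power2_eq_square)
      ultimately show ?thesis by (simp add: algebra_simps)
    qed
  qed
  define sq where "sq n = 1 / (real n + 1)" for n :: nat
  have sq0: "0 < sq n" "sq n \<le> 1" for n by (auto simp: sq_def field_simps)
  have sqlim: "sq \<longlonglongrightarrow> 0"
  proof -
    have e: "sq = (\<lambda>n. 1 / (1 + real n))" by (rule ext) (simp add: sq_def add.commute)
    show ?thesis unfolding e using LIMSEQ_inverse_real_of_nat by (simp add: inverse_eq_divide)
  qed
  have lim: "(\<lambda>n. inner (as (sq n)) (bs (sq n)) + \<beta>\<^sub>1 * norm (bs (sq n))^2)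
      \<longlonglongrightarrow> inner ((1 - 0) *\<^sub>R a + 0 *\<^sub>R a0) ((1 - 0) *\<^sub>R b + 0 *\<^sub>R b0) + \<beta>\<^sub>1 * norm ((1 - 0) *\<^sub>R b + 0 *\<^sub>R b0)^2"
    unfolding as_def bs_def by (intro tendsto_intros sqlim)
  have "inner a b + \<beta>\<^sub>1 * norm b^2 \<le> 0"
    using LIMSEQ_le_const2[OF lim] key sq0 by simp
  thus "inner a b \<le> - \<beta>\<^sub>1" using nb by simp
qed


theorem proposition4p3:
  fixes T :: "('a::{real_inner, complete_space} \<times> 'a) set"
  assumes "closed T" and "convex T" and "cone T"
  shows "((\<exists>\<beta>>0. \<forall>(h, z)\<in>polar T. norm z = 1 \<longrightarrow> inner h z \<le> - \<beta>)
            \<longrightarrow> (\<exists>\<beta>\<^sub>1>0. \<forall>h \<in> sphere 0 1 \<inter> sqri (proj_h T).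
                    \<exists>z. (h, z) \<in> T \<and> inner h z \<ge> \<beta>\<^sub>1))
       \<and> ((qri (polar T) \<noteq> {} \<and> qri (proj_z (polar T)) \<subseteq> sqri (proj_h T))
            \<longrightarrow> (\<exists>\<beta>\<^sub>1>0. \<forall>h \<in> sphere 0 1 \<inter> sqri (proj_h T).
                    \<exists>z. (h, z) \<in> T \<and> inner h z \<ge> \<beta>\<^sub>1)
            \<longrightarrow> (\<exists>\<beta>>0. \<forall>(h, z)\<in>polar T. norm z = 1 \<longrightarrow> inner h z \<le> - \<beta>))"
proof (intro conjI impI)
  assume "\<exists>\<beta>>0. \<forall>(h, z)\<in>polar T. norm z = 1 \<longrightarrow> inner h z \<le> - \<beta>"
  then obtain \<beta> where b0: "\<beta> > 0" and beta: "\<forall>(h, z)\<in>polar T. norm z = 1 \<longrightarrow> inner h z \<le> - \<beta>"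
    by blast
  have "\<forall>h \<in> sphere 0 1 \<inter> sqri (proj_h T). \<exists>z. (h, z) \<in> T \<and> inner h z \<ge> \<beta>/2"
    using dir1[OF assms b0 beta] by blast
  moreover have "\<beta>/2 > 0" using b0 by simp
  ultimately show "\<exists>\<beta>\<^sub>1>0. \<forall>h \<in> sphere 0 1 \<inter> sqri (proj_h T). \<exists>z. (h, z) \<in> T \<and> inner h z \<ge> \<beta>\<^sub>1"
    by blast
next
  assume q: "qri (polar T) \<noteq> {} \<and> qri (proj_z (polar T)) \<subseteq> sqri (proj_h T)"
  assume "\<exists>\<beta>\<^sub>1>0. \<forall>h \<in> sphere 0 1 \<inter> sqri (proj_h T). \<exists>z. (h, z) \<in> T \<and> inner h z \<ge> \<beta>\<^sub>1"
  then obtain \<beta>\<^sub>1 where b1: "\<beta>\<^sub>1 > 0"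
    and ii: "\<forall>h \<in> sphere 0 1 \<inter> sqri (proj_h T). \<exists>z. (h, z) \<in> T \<and> inner h z \<ge> \<beta>\<^sub>1" by blast
  have "\<forall>(a, b)\<in>polar T. norm b = 1 \<longrightarrow> inner a b \<le> - \<beta>\<^sub>1"
    using dir2[OF assms(3) _ _ b1 ii] q by blast
  thus "\<exists>\<beta>>0. \<forall>(h, z)\<in>polar T. norm z = 1 \<longrightarrow> inner h z \<le> - \<beta>" using b1 by blast
qed

end
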